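(* Let $P$ be a finite poset. The space of functions $\mathcal{J}(P)\to\mathbb{R}$ that are $0$-mesic under rowmotion is equal to $\operatorname{span}_{\mathbb{R}}\{T_A\colon A\in\mathcal{A}(P)\}$.
   Context: $\mathcal{J}(P)$ is the set of order ideals of $P$ and $\mathcal{A}(P)$ the set of antichains (including the empty antichain). Rowmotion $\rho\colon\mathcal{J}(P)\to\mathcal{J}(P)$ sends $I$ to the order ideal generated by the minimal elements of $P\setminus I$. For $A\in\mathcal{A}(P)$ and $I\in\mathcal{J}(P)$: $T_A^+(I)=1$ if $A\subseteq\min(P\setminus I)$, else $0$; $T_A^-(I)=1$ if $A\subseteq\max(I)$, else $0$; $T_A=T_A^+-T_A^-$. A function is $0$-mesic under rowmotion if its average over every rowmotion orbit is $0$. *)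

theory Defs
  imports Complex_Main "HOL-Library.Function_Algebras"
begin

text \<open>A finite poset is a finite carrier P with a partial order relation le on P
  (pairs (x,y) in le mean x <= y).\<close>

definition order_ideals :: "'a set \<Rightarrow> ('a \<times> 'a) set \<Rightarrow> 'a set set" where
  "order_ideals P le = {I. I \<subseteq> P \<and> (\<forall>x\<in>I. \<forall>y\<in>P. (y, x) \<in> le \<longrightarrow> y \<in> I)}"

definition antichains :: "'a set \<Rightarrow> ('a \<times> 'a) set \<Rightarrow> 'a set set" where
  "antichains P le = {A. A \<subseteq> P \<and> (\<forall>x\<in>A. \<forall>y\<in>A. (x, y) \<in> le \<longrightarrow> x = y)}"

definition min_elems :: "('a \<times> 'a) set \<Rightarrow> 'a set \<Rightarrow> 'a set" where
  "min_elems le S = {x\<in>S. \<forall>y\<in>S. (y, x) \<in> le \<longrightarrow> y = x}"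

definition max_elems :: "('a \<times> 'a) set \<Rightarrow> 'a set \<Rightarrow> 'a set" where
  "max_elems le S = {x\<in>S. \<forall>y\<in>S. (x, y) \<in> le \<longrightarrow> y = x}"

definition gen_ideal :: "'a set \<Rightarrow> ('a \<times> 'a) set \<Rightarrow> 'a set \<Rightarrow> 'a set" where
  "gen_ideal P le S = {y\<in>P. \<exists>x\<in>S. (y, x) \<in> le}"

definition rowmotion :: "'a set \<Rightarrow> ('a \<times> 'a) set \<Rightarrow> 'a set \<Rightarrow> 'a set" where
  "rowmotion P le I = gen_ideal P le (min_elems le (P - I))"

definition rowmotion_orbit :: "'a set \<Rightarrow> ('a \<times> 'a) set \<Rightarrow> 'a set \<Rightarrow> 'a set set" where
  "rowmotion_orbit P le I = {(rowmotion P le ^^ k) I | k. True}"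

definition T_plus :: "'a set \<Rightarrow> ('a \<times> 'a) set \<Rightarrow> 'a set \<Rightarrow> 'a set \<Rightarrow> real" where
  "T_plus P le A I = (if I \<in> order_ideals P le \<and> A \<subseteq> min_elems le (P - I) then 1 else 0)"

definition T_minus :: "'a set \<Rightarrow> ('a \<times> 'a) set \<Rightarrow> 'a set \<Rightarrow> 'a set \<Rightarrow> real" where
  "T_minus P le A I = (if I \<in> order_ideals P le \<and> A \<subseteq> max_elems le I then 1 else 0)"

definition T_stat :: "'a set \<Rightarrow> ('a \<times> 'a) set \<Rightarrow> 'a set \<Rightarrow> 'a set \<Rightarrow> real" where
  "T_stat P le A I = T_plus P le A I - T_minus P le A I"

definition zero_mesic_rowmotion :: "'a set \<Rightarrow> ('a \<times> 'a) set \<Rightarrow> ('a set \<Rightarrow> real) \<Rightarrow> bool" where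
  "zero_mesic_rowmotion P le f \<longleftrightarrow>
     (\<forall>I\<in>order_ideals P le.
        (\<Sum>K\<in>rowmotion_orbit P le I. f K) / real (card (rowmotion_orbit P le I)) = 0)"

text \<open>Real functions on J(P), represented as functions on 'a set vanishing off J(P).\<close>
definition funs_on_ideals :: "'a set \<Rightarrow> ('a \<times> 'a) set \<Rightarrow> ('a set \<Rightarrow> real) set" where
  "funs_on_ideals P le = {f. \<forall>I. I \<notin> order_ideals P le \<longrightarrow> f I = 0}"

definition real_fun_span :: "('b \<Rightarrow> real) set \<Rightarrow> ('b \<Rightarrow> real) set" where
  "real_fun_span S = module.span (\<lambda>c f. \<lambda>x. c * f x) S"

end

theory Submission
  imports Defs
begin

lemma funpow_in: "f ` S \<subseteq> S \<Longrightarrow> x \<in> S \<Longrightarrow> (f^^k) x \<in> S"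
  by (induction k) auto

lemma funpow_cancel:
  assumes "inj_on f S" "f ` S \<subseteq> S"
  shows "a \<in> S \<Longrightarrow> b \<in> S \<Longrightarrow> (f^^i) a = (f^^i) b \<Longrightarrow> a = b"
proof (induction i arbitrary: a b)
  case 0 then show ?case by simp
next
  case (Suc i)
  have "(f^^i) (f a) = (f^^i) (f b)" using Suc.prems(3) by (simp add: funpow_swap1)
  hence "f a = f b" using Suc.IH[of "f a" "f b"] Suc.prems assms(2) by auto
  thus ?case using assms(1) Suc.prems inj_onD by metis
qed

lemma exists_period:
  assumes fin: "finite S" and inj: "inj_on f S" and cl: "f ` S \<subseteq> S" and x: "x \<in> S"
  shows "\<exists>n>0. (f^^n) x = x"
proof -
  have "(\<lambda>k. (f^^k) x) ` {..card S} \<subseteq> S" using funpow_in[OF cl x] by blast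
  hence "\<not> inj_on (\<lambda>k. (f^^k) x) {..card S}"
    using card_inj_on_le[OF _ _ fin, of "\<lambda>k. (f^^k) x" "{..card S}"] by auto
  then obtain i j where ij: "i \<noteq> j" "(f^^i) x = (f^^j) x" unfolding inj_on_def by blast
  have main: "\<exists>n>0. (f^^n) x = x" if "i < j" "(f^^i) x = (f^^j) x" for i j
  proof -
    have "(f^^j) x = (f^^i) ((f^^(j-i)) x)"
      using that by (metis add_diff_inverse_nat comp_apply funpow_add less_imp_not_less)
    hence "(f^^(j-i)) x = x"
      using funpow_cancel[OF inj cl, of "(f^^(j-i)) x" x i] funpow_in[OF cl x] x that(2) by auto
    thus ?thesis using that by (intro exI[of _ "j-i"]) auto
  qed
  show ?thesis using ij main[of i j] main[of j i] by (metis linorder_neqE_nat)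
qed

lemma coboundary:
  fixes f :: "'b \<Rightarrow> 'b" and h :: "'b \<Rightarrow> real"
  assumes fin: "finite S" and inj: "inj_on f S" and cl: "f ` S \<subseteq> S"
    and z: "\<And>x. x \<in> S \<Longrightarrow> (\<Sum>y\<in>{(f^^k) x | k. True}. h y) = 0"
  shows "\<exists>g. \<forall>x\<in>S. h x = g (f x) - g x"
proof -
  define per where "per x = (LEAST n. 0 < n \<and> (f^^n) x = x)" for x
  have per: "0 < per x \<and> (f^^per x) x = x" if "x \<in> S" for x
    unfolding per_def by (rule LeastI_ex) (use exists_period[OF fin inj cl that] in auto)
  have per_min: "\<not> (0 < n \<and> (f^^n) x = x)" if "n < per x" for x n
    using not_less_Least that unfolding per_def by blast
  have per_f: "per (f x) = per x" if "x \<in> S" for x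
  proof -
    have fx: "f x \<in> S" using cl that by auto
    have "(f^^per x) (f x) = f x" using per[OF that] by (metis funpow_swap1)
    hence le1: "per (f x) \<le> per x" using per_min[of "per x" "f x"] per[OF that] by (meson not_le)
    have "f ((f^^per (f x)) x) = f x" using per[OF fx] by (metis funpow_swap1)
    hence "(f^^per (f x)) x = x" using inj funpow_in[OF cl that] that by (meson inj_onD)
    hence "per x \<le> per (f x)" using per_min[of "per (f x)" x] per[OF fx] by (meson not_le)
    thus ?thesis using le1 by simp
  qed
  have mod: "(f^^m) x = (f^^(m mod per x)) x" if "x \<in> S" for x m
  proof -
    have q: "(f^^(q * per x)) x = x" for q
      by (induction q) (simp_all add: funpow_add per[OF that])
    have "(f^^m) x = (f^^(m mod per x + m div per x * per x)) x" by simp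
    also have "\<dots> = (f^^(m mod per x)) ((f^^(m div per x * per x)) x)" by (simp only: funpow_add o_apply)
    finally show ?thesis using q by simp
  qed
  have orb: "{(f^^k) x | k. True} = (\<lambda>k. (f^^k) x) ` {..<per x}" if "x \<in> S" for x
  proof
    show "{(f^^k) x | k. True} \<subseteq> (\<lambda>k. (f^^k) x) ` {..<per x}"
    proof
      fix y assume "y \<in> {(f^^k) x | k. True}"
      then obtain k where "y = (f^^k) x" by blast
      hence "y = (f^^(k mod per x)) x" using mod[OF that] by simp
      moreover have "k mod per x < per x" using per[OF that] by simp
      ultimately show "y \<in> (\<lambda>k. (f^^k) x) ` {..<per x}" by blast
    qed
  qed blast
  have ne: "(f^^i) x \<noteq> (f^^j) x" if "x \<in> S" "i < j" "j < per x" for x i j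
  proof
    assume eq: "(f^^i) x = (f^^j) x"
    have "(f^^j) x = (f^^i) ((f^^(j-i)) x)"
      using that by (metis add_diff_inverse_nat comp_apply funpow_add less_imp_not_less)
    hence "(f^^(j-i)) x = x"
      using funpow_cancel[OF inj cl, of "(f^^(j-i)) x" x i] funpow_in[OF cl that(1)] that(1) eq by auto
    thus False using per_min[of "j-i" x] that less_imp_diff_less[of j "per x" i] by auto
  qed
  have injk: "inj_on (\<lambda>k. (f^^k) x) {..<per x}" if "x \<in> S" for x
    by (rule inj_onI) (metis lessThan_iff linorder_neqE_nat ne[OF that])
  have sz: "(\<Sum>k<per x. h ((f^^k) x)) = 0" if "x \<in> S" for x
    using z[OF that] orb[OF that] sum.reindex[OF injk[OF that], of h] by simp
  define g where "g x = (\<Sum>k<per x. real k * h ((f^^k) x)) / real (per x)" for x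
  have "h x = g (f x) - g x" if x: "x \<in> S" for x
  proof -
    obtain m where m: "per x = Suc m" using per[OF x] gr0_conv_Suc by auto
    define a where "a k = h ((f^^k) x)" for k
    have aS: "a (Suc m) = a 0" unfolding a_def using per[OF x] m by simp
    have g1: "g (f x) = (\<Sum>k<Suc m. real k * a (Suc k)) / real (Suc m)"
      unfolding g_def a_def per_f[OF x] m by (simp add: funpow_Suc_right del: funpow.simps)
    have g2: "g x = (\<Sum>k<Suc m. real k * a k) / real (Suc m)"
      unfolding g_def a_def m by simp
    have A: "(\<Sum>k<Suc m. real k * a (Suc k)) = (\<Sum>k<m. real k * a (Suc k)) + real m * a 0"
      using aS by simp
    have B: "(\<Sum>k<Suc m. real k * a k) = (\<Sum>k<m. real k * a (Suc k)) + (\<Sum>k<m. a (Suc k))"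
      unfolding sum.lessThan_Suc_shift by (simp add: sum.distrib[symmetric] algebra_simps)
    have C: "a 0 + (\<Sum>k<m. a (Suc k)) = 0"
      using sz[OF x] unfolding m a_def sum.lessThan_Suc_shift by simp
    have "g (f x) - g x = (real m * a 0 - (\<Sum>k<m. a (Suc k))) / real (Suc m)"
      unfolding g1 g2 A B diff_divide_distrib[symmetric] by simp
    also have "\<dots> = a 0"
      using C by (simp add: field_simps)
    finally show ?thesis unfolding a_def by simp
  qed
  thus ?thesis by blast
qed

lemma min_ex:
  assumes fin: "finite P" and po: "partial_order_on P le" and sub: "le \<subseteq> P \<times> P"
    and S: "S \<subseteq> P" and x: "x \<in> S"
  shows "\<exists>m\<in>min_elems le S. (m, x) \<in> le"
proof -
  have refl: "\<And>y. y \<in> P \<Longrightarrow> (y, y) \<in> le"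
    using po unfolding partial_order_on_def preorder_on_def refl_on_def by blast
  have trans: "\<And>a b c. (a, b) \<in> le \<Longrightarrow> (b, c) \<in> le \<Longrightarrow> (a, c) \<in> le"
    using po unfolding partial_order_on_def preorder_on_def trans_def by blast
  have anti: "\<And>a b. (a, b) \<in> le \<Longrightarrow> (b, a) \<in> le \<Longrightarrow> a = b"
    using po unfolding partial_order_on_def antisym_def by blast
  define D where "D y = {z\<in>S. (z, y) \<in> le}" for y
  have "x \<in> D x" unfolding D_def using refl x S by auto
  then obtain m where m: "m \<in> D x" and mmin: "\<And>y. y \<in> D x \<Longrightarrow> card (D m) \<le> card (D y)"
    using ex_has_least_nat[of "\<lambda>y. y \<in> D x" x "\<lambda>y. card (D y)"] by blast
  have "m \<in> min_elems le S"
    unfolding min_elems_def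
  proof (intro CollectI conjI ballI impI)
    show "m \<in> S" using m unfolding D_def by auto
    fix y assume y: "y \<in> S" "(y, m) \<in> le"
    show "y = m"
    proof (rule ccontr)
      assume ne: "y \<noteq> m"
      have "D y \<subset> D m"
      proof
        show "D y \<subseteq> D m" unfolding D_def using y trans by auto
        have "m \<in> D m" unfolding D_def using refl \<open>m \<in> S\<close> S by auto
        moreover have "m \<notin> D y" unfolding D_def using anti y ne by auto
        ultimately show "D y \<noteq> D m" by blast
      qed
      moreover have "finite (D m)" unfolding D_def by (rule finite_subset[OF _ fin]) (use S in auto)
      ultimately have "card (D y) < card (D m)" by (simp add: psubset_card_mono)
      moreover have "y \<in> D x" using y m trans unfolding D_def by auto
      ultimately show False using mmin by fastforce
    qed
  qed
  thus ?thesis using m unfolding D_def by auto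
qed

lemma max_ex:
  assumes fin: "finite P" and po: "partial_order_on P le" and sub: "le \<subseteq> P \<times> P"
    and S: "S \<subseteq> P" and x: "x \<in> S"
  shows "\<exists>m\<in>max_elems le S. (x, m) \<in> le"
proof -
  have "\<exists>m\<in>min_elems (le\<inverse>) S. (m, x) \<in> le\<inverse>"
    by (rule min_ex[OF fin _ _ S x]) (use po sub in auto)
  moreover have "min_elems (le\<inverse>) S = max_elems le S"
    unfolding min_elems_def max_elems_def by auto
  ultimately show ?thesis by auto
qed

locale fposet =
  fixes P :: "'a set" and le :: "('a \<times> 'a) set"
  assumes fin: "finite P" and po: "partial_order_on P le" and sub: "le \<subseteq> P \<times> P"
begin

lemma refl: "y \<in> P \<Longrightarrow> (y, y) \<in> le"
  using po unfolding partial_order_on_def preorder_on_def refl_on_def by blast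
lemma trans': "(a, b) \<in> le \<Longrightarrow> (b, c) \<in> le \<Longrightarrow> (a, c) \<in> le"
  using po unfolding partial_order_on_def preorder_on_def trans_def by blast
lemma anti: "(a, b) \<in> le \<Longrightarrow> (b, a) \<in> le \<Longrightarrow> a = b"
  using po unfolding partial_order_on_def antisym_def by blast
lemma inP: "(a, b) \<in> le \<Longrightarrow> a \<in> P \<and> b \<in> P"
  using sub by auto

abbreviation "J \<equiv> order_ideals P le"
abbreviation "AC \<equiv> antichains P le"
abbreviation "\<rho> \<equiv> rowmotion P le"

lemma ideal_sub: "I \<in> J \<Longrightarrow> I \<subseteq> P"
  unfolding order_ideals_def by auto

lemma ideal_down: "I \<in> J \<Longrightarrow> x \<in> I \<Longrightarrow> (y, x) \<in> le \<Longrightarrow> y \<in> I"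
  using inP[of y x] unfolding order_ideals_def by blast

lemma finJ: "finite J"
  by (rule finite_subset[of _ "Pow P"]) (use fin in \<open>auto simp: order_ideals_def\<close>)

lemma finAC: "finite AC"
  by (rule finite_subset[of _ "Pow P"]) (use fin in \<open>auto simp: antichains_def\<close>)

lemma rho_ideal: "\<rho> I \<in> J"
  unfolding rowmotion_def gen_ideal_def order_ideals_def by (blast intro: trans')

lemma rho_cl: "\<rho> ` J \<subseteq> J"
  using rho_ideal by auto

lemma max_rho: assumes "I \<in> J" shows "max_elems le (\<rho> I) = min_elems le (P - I)"
proof
  show "max_elems le (\<rho> I) \<subseteq> min_elems le (P - I)"
  proof
    fix y assume y: "y \<in> max_elems le (\<rho> I)"
    then obtain x where x: "x \<in> min_elems le (P - I)" "(y, x) \<in> le"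
      unfolding max_elems_def rowmotion_def gen_ideal_def by blast
    have "x \<in> \<rho> I" using x refl unfolding rowmotion_def gen_ideal_def min_elems_def by auto
    hence "x = y" using y x(2) unfolding max_elems_def by auto
    thus "y \<in> min_elems le (P - I)" using x by simp
  qed
next
  show "min_elems le (P - I) \<subseteq> max_elems le (\<rho> I)"
  proof
    fix x assume x: "x \<in> min_elems le (P - I)"
    have xr: "x \<in> \<rho> I" using x refl unfolding rowmotion_def gen_ideal_def min_elems_def by auto
    have "y = x" if yr: "y \<in> \<rho> I" and xy: "(x, y) \<in> le" for y
    proof -
      obtain x' where x': "x' \<in> min_elems le (P - I)" "(y, x') \<in> le"
        using yr unfolding rowmotion_def gen_ideal_def by blast
      have "(x, x') \<in> le" using trans' xy x'(2) by blast
      hence "x = x'" using x x' unfolding min_elems_def by auto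
      thus ?thesis using anti xy x'(2) by auto
    qed
    thus "x \<in> max_elems le (\<rho> I)" using xr unfolding max_elems_def by auto
  qed
qed

lemma ideal_from_min: assumes I: "I \<in> J"
  shows "I = P - {y\<in>P. \<exists>x\<in>min_elems le (P - I). (x, y) \<in> le}"
proof
  show "I \<subseteq> P - {y\<in>P. \<exists>x\<in>min_elems le (P - I). (x, y) \<in> le}"
  proof
    fix y assume y: "y \<in> I"
    have "\<not> (x \<in> min_elems le (P - I) \<and> (x, y) \<in> le)" for x
      using ideal_down[OF I y, of x] unfolding min_elems_def by auto
    thus "y \<in> P - {y\<in>P. \<exists>x\<in>min_elems le (P - I). (x, y) \<in> le}"
      using y ideal_sub[OF I] by auto
  qed
  show "P - {y\<in>P. \<exists>x\<in>min_elems le (P - I). (x, y) \<in> le} \<subseteq> I"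
  proof
    fix y assume y: "y \<in> P - {y\<in>P. \<exists>x\<in>min_elems le (P - I). (x, y) \<in> le}"
    show "y \<in> I"
    proof (rule ccontr)
      assume "y \<notin> I"
      then obtain m where "m \<in> min_elems le (P - I)" "(m, y) \<in> le"
        using min_ex[OF fin po sub, of "P - I" y] y by auto
      thus False using y by auto
    qed
  qed
qed

lemma ideal_from_max: assumes I: "I \<in> J"
  shows "I = {y\<in>P. \<exists>x\<in>max_elems le I. (y, x) \<in> le}"
proof
  show "I \<subseteq> {y\<in>P. \<exists>x\<in>max_elems le I. (y, x) \<in> le}"
  proof
    fix y assume y: "y \<in> I"
    then obtain m where "m \<in> max_elems le I" "(y, m) \<in> le"
      using max_ex[OF fin po sub ideal_sub[OF I] y] by auto
    thus "y \<in> {y\<in>P. \<exists>x\<in>max_elems le I. (y, x) \<in> le}" using y ideal_sub[OF I] by auto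
  qed
  show "{y\<in>P. \<exists>x\<in>max_elems le I. (y, x) \<in> le} \<subseteq> I"
    using ideal_down[OF I] unfolding max_elems_def by auto
qed

lemma max_inj: "I \<in> J \<Longrightarrow> K \<in> J \<Longrightarrow> max_elems le I = max_elems le K \<Longrightarrow> I = K"
proof -
  assume I: "I \<in> J" and K: "K \<in> J" and eq: "max_elems le I = max_elems le K"
  have "I = {y\<in>P. \<exists>x\<in>max_elems le I. (y, x) \<in> le}" by (rule ideal_from_max[OF I])
  also have "\<dots> = {y\<in>P. \<exists>x\<in>max_elems le K. (y, x) \<in> le}" by (simp only: eq)
  also have "\<dots> = K" by (rule ideal_from_max[OF K, symmetric])
  finally show "I = K" .
qed

lemma rho_inj: "inj_on \<rho> J"
proof (rule inj_onI)
  fix I K assume I: "I \<in> J" and K: "K \<in> J" and eq: "\<rho> I = \<rho> K"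
  have "min_elems le (P - I) = min_elems le (P - K)"
    using max_rho[OF I] max_rho[OF K] eq by simp
  hence "P - {y\<in>P. \<exists>x\<in>min_elems le (P - I). (x, y) \<in> le} = P - {y\<in>P. \<exists>x\<in>min_elems le (P - K). (x, y) \<in> le}"
    by (simp only:)
  thus "I = K" using ideal_from_min[OF I, symmetric] ideal_from_min[OF K, symmetric] by (simp only:)
qed

lemma sub_max_ac: "I \<in> J \<Longrightarrow> B \<subseteq> max_elems le I \<Longrightarrow> B \<in> AC"
proof -
  assume I: "I \<in> J" and B: "B \<subseteq> max_elems le I"
  have "B \<subseteq> P" using B ideal_sub[OF I] unfolding max_elems_def by auto
  moreover have "x = y" if "x \<in> B" "y \<in> B" "(x, y) \<in> le" for x y
    using B that unfolding max_elems_def by blast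
  ultimately show ?thesis unfolding antichains_def by blast
qed

lemma T_plus_rho: "I \<in> J \<Longrightarrow> T_plus P le A I = T_minus P le A (\<rho> I)"
  unfolding T_plus_def T_minus_def using max_rho rho_ideal by simp

end

lemma alt_sum:
  assumes fin: "finite S" and U: "U \<subseteq> S"
  shows "(\<Sum>T\<in>{T. T \<subseteq> S \<and> U \<subseteq> T}. (-1::real) ^ (card T - card U)) = (if U = S then 1 else 0)"
proof (cases "U = S")
  case True
  hence "{T. T \<subseteq> S \<and> U \<subseteq> T} = {S}" by auto
  thus ?thesis using True by simp
next
  case False
  hence ps: "U \<subset> S" using U by auto
  have "(\<Sum>T\<in>{T. T \<subseteq> S \<and> U \<subseteq> T}. (-1::real) ^ (card T - card U))
      = (\<Sum>T\<in>{T. T \<subseteq> S \<and> U \<subseteq> T}. (-1) ^ card U * (-1) ^ card T)"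
  proof (rule sum.cong[OF refl])
    fix T assume "T \<in> {T. T \<subseteq> S \<and> U \<subseteq> T}"
    hence "card U \<le> card T" using fin by (auto intro: card_mono finite_subset)
    hence "(-1::real) ^ (card T - card U) = (-1) ^ (card T + card U)"
      by (simp add: neg_one_power_add_eq_neg_one_power_diff)
    thus "(-1::real) ^ (card T - card U) = (-1) ^ card U * (-1) ^ card T"
      by (simp add: power_add mult.commute)
  qed
  also have "\<dots> = (-1) ^ card U * (\<Sum>T\<in>{T. T \<subseteq> S \<and> U \<subseteq> T}. (-1) ^ card T)"
    by (simp add: sum_distrib_left)
  also have "(\<Sum>T\<in>{T. T \<subseteq> S \<and> U \<subseteq> T}. (-1::real) ^ card T) = 0"
  proof (rule sum_alternating_cancels)
    show "finite {T. T \<subseteq> S \<and> U \<subseteq> T}" by (rule finite_subset[of _ "Pow S"]) (use fin in auto)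
    show "card {x \<in> {T. T \<subseteq> S \<and> U \<subseteq> T}. even (card x)} = card {x \<in> {T. T \<subseteq> S \<and> U \<subseteq> T}. odd (card x)}"
      using card_subsupersets_even_odd[OF fin ps] by simp
  qed
  finally show ?thesis using False by simp
qed

lemma sum_fun_app: "(\<Sum>a\<in>A. F a) x = (\<Sum>a\<in>A. F a x)"
  by (induction A rule: infinite_finite_induct) auto

context fposet
begin

lemma expand_minus: "\<exists>c. \<forall>I\<in>J. g I = (\<Sum>B\<in>AC. c B * T_minus P le B I)"
proof -
  define s where "s (B::'a set) (K::'a set) = (-1::real) ^ (card B - card (max_elems le K))" for B K
  define c where "c B = (\<Sum>K\<in>J. if max_elems le K \<subseteq> B then g K * s B K else 0)" for B
  have "g I = (\<Sum>B\<in>AC. c B * T_minus P le B I)" if I: "I \<in> J" for I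
  proof -
    have inner: "(\<Sum>B\<in>AC. if max_elems le K \<subseteq> B \<and> B \<subseteq> max_elems le I then s B K else 0)
        = (if K = I then 1 else 0)" if K: "K \<in> J" for K
    proof -
      have "(\<Sum>B\<in>AC. if max_elems le K \<subseteq> B \<and> B \<subseteq> max_elems le I then s B K else 0)
          = (\<Sum>B\<in>{B\<in>AC. max_elems le K \<subseteq> B \<and> B \<subseteq> max_elems le I}. s B K)"
        by (simp add: sum.inter_filter[OF finAC])
      also have "{B\<in>AC. max_elems le K \<subseteq> B \<and> B \<subseteq> max_elems le I}
          = {B. B \<subseteq> max_elems le I \<and> max_elems le K \<subseteq> B}"
        using sub_max_ac[OF I] by blast
      finally have eq: "(\<Sum>B\<in>AC. if max_elems le K \<subseteq> B \<and> B \<subseteq> max_elems le I then s B K else 0)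
          = (\<Sum>B\<in>{B. B \<subseteq> max_elems le I \<and> max_elems le K \<subseteq> B}. s B K)" .
      show ?thesis
      proof (cases "max_elems le K \<subseteq> max_elems le I")
        case True
        have "finite (max_elems le I)"
          using ideal_sub[OF I] fin unfolding max_elems_def by (auto intro: finite_subset)
        from alt_sum[OF this True] have
          "(\<Sum>B\<in>{B. B \<subseteq> max_elems le I \<and> max_elems le K \<subseteq> B}. s B K)
            = (if max_elems le K = max_elems le I then 1 else 0)"
          unfolding s_def .
        moreover have "(max_elems le K = max_elems le I) = (K = I)"
          using max_inj[OF K I] by auto
        ultimately show ?thesis using eq by simp
      next
        case False
        hence emp: "{B. B \<subseteq> max_elems le I \<and> max_elems le K \<subseteq> B} = {}" by auto
        have "K \<noteq> I" using False by auto
        thus ?thesis unfolding eq emp by simp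
      qed
    qed
    have "(\<Sum>B\<in>AC. c B * T_minus P le B I)
        = (\<Sum>B\<in>AC. \<Sum>K\<in>J. if max_elems le K \<subseteq> B \<and> B \<subseteq> max_elems le I then g K * s B K else 0)"
      unfolding c_def T_minus_def using I by (auto simp: sum_distrib_right intro!: sum.cong)
    also have "\<dots> = (\<Sum>K\<in>J. \<Sum>B\<in>AC. if max_elems le K \<subseteq> B \<and> B \<subseteq> max_elems le I then g K * s B K else 0)"
      by (rule sum.swap)
    also have "\<dots> = (\<Sum>K\<in>J. g K * (\<Sum>B\<in>AC. if max_elems le K \<subseteq> B \<and> B \<subseteq> max_elems le I then s B K else 0))"
      by (auto simp: sum_distrib_left intro!: sum.cong)
    also have "\<dots> = (\<Sum>K\<in>J. if K = I then g K else 0)"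
      using inner by (auto intro!: sum.cong)
    also have "\<dots> = g I" using I finJ by simp
    finally show ?thesis by simp
  qed
  thus ?thesis by blast
qed

lemma orbit_sub: "I \<in> J \<Longrightarrow> rowmotion_orbit P le I \<subseteq> J"
  unfolding rowmotion_orbit_def using funpow_in[OF rho_cl] by blast

lemma orbit_fin: "I \<in> J \<Longrightarrow> finite (rowmotion_orbit P le I)"
  using orbit_sub finJ finite_subset by blast

lemma orbit_mem: "I \<in> rowmotion_orbit P le I"
  unfolding rowmotion_orbit_def by (auto intro: exI[of _ 0])

lemma zm_iff: "zero_mesic_rowmotion P le f \<longleftrightarrow> (\<forall>I\<in>J. (\<Sum>K\<in>rowmotion_orbit P le I. f K) = 0)"
proof -
  have nz: "\<forall>I\<in>J. card (rowmotion_orbit P le I) \<noteq> 0"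
    using orbit_fin orbit_mem by (metis card_0_eq empty_iff)
  show ?thesis unfolding zero_mesic_rowmotion_def divide_eq_0_iff of_nat_eq_0_iff using nz by blast
qed

lemma orbit_rho: assumes I: "I \<in> J" shows "\<rho> ` rowmotion_orbit P le I = rowmotion_orbit P le I"
proof (rule endo_inj_surj[OF orbit_fin[OF I]])
  show "\<rho> ` rowmotion_orbit P le I \<subseteq> rowmotion_orbit P le I"
  proof
    fix y assume "y \<in> \<rho> ` rowmotion_orbit P le I"
    then obtain k where "y = \<rho> ((\<rho> ^^ k) I)" unfolding rowmotion_orbit_def by blast
    hence "y = (\<rho> ^^ Suc k) I" by simp
    thus "y \<in> rowmotion_orbit P le I" unfolding rowmotion_orbit_def by blast
  qed
  show "inj_on \<rho> (rowmotion_orbit P le I)" using rho_inj orbit_sub[OF I] by (rule inj_on_subset)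
qed

lemma T_in_Z: "T_stat P le A \<in> {f \<in> funs_on_ideals P le. zero_mesic_rowmotion P le f}"
proof -
  have "T_stat P le A \<in> funs_on_ideals P le"
    unfolding funs_on_ideals_def T_stat_def T_plus_def T_minus_def by simp
  moreover have "(\<Sum>K\<in>rowmotion_orbit P le I. T_stat P le A K) = 0" if I: "I \<in> J" for I
  proof -
    let ?O = "rowmotion_orbit P le I"
    have "(\<Sum>K\<in>?O. T_plus P le A K) = (\<Sum>K\<in>?O. T_minus P le A (\<rho> K))"
      using T_plus_rho orbit_sub[OF I] by (auto intro!: sum.cong)
    also have "\<dots> = (\<Sum>K\<in>\<rho> ` ?O. T_minus P le A K)"
      by (rule sum.reindex[symmetric, unfolded comp_def]) (rule inj_on_subset[OF rho_inj orbit_sub[OF I]])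
    also have "\<dots> = (\<Sum>K\<in>?O. T_minus P le A K)" using orbit_rho[OF I] by simp
    finally show ?thesis unfolding T_stat_def by (simp add: sum_subtractf)
  qed
  ultimately show ?thesis using zm_iff by auto
qed

end

interpretation rfs: module "\<lambda>c (f::'b \<Rightarrow> real) x. c * f x"
  by unfold_locales (auto simp: fun_eq_iff algebra_simps)

theorem theorem6p2:
  fixes P :: "'a set" and le :: "('a \<times> 'a) set"
  assumes "finite P" and "partial_order_on P le" and "le \<subseteq> P \<times> P"
  shows "{f \<in> funs_on_ideals P le. zero_mesic_rowmotion P le f}
           = real_fun_span ((\<lambda>A. T_stat P le A) ` antichains P le)"
proof -
  interpret fposet P le using assms by unfold_locales
  let ?Z = "{f \<in> funs_on_ideals P le. zero_mesic_rowmotion P le f}"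
  let ?S = "(\<lambda>A. T_stat P le A) ` antichains P le"
  show ?thesis unfolding real_fun_span_def
  proof
    show "?Z \<subseteq> rfs.span ?S"
    proof
      fix f assume f: "f \<in> ?Z"
      have "\<exists>g. \<forall>x\<in>J. f x = g (\<rho> x) - g x"
        by (rule coboundary[OF finJ rho_inj rho_cl]) (use f zm_iff in \<open>auto simp: rowmotion_orbit_def\<close>)
      then obtain g where g: "\<And>x. x \<in> J \<Longrightarrow> f x = g (\<rho> x) - g x" by blast
      obtain c where c: "\<And>I. I \<in> J \<Longrightarrow> g I = (\<Sum>B\<in>AC. c B * T_minus P le B I)"
        using expand_minus[of g] by blast
      have "f = (\<Sum>B\<in>AC. (\<lambda>x. c B * T_stat P le B x))"
      proof
        fix I
        show "f I = (\<Sum>B\<in>AC. (\<lambda>x. c B * T_stat P le B x)) I"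
        proof (cases "I \<in> J")
          case True
          have "f I = (\<Sum>B\<in>AC. c B * T_minus P le B (\<rho> I)) - (\<Sum>B\<in>AC. c B * T_minus P le B I)"
            using g[OF True] c[OF True] c[OF rho_ideal] by simp
          also have "\<dots> = (\<Sum>B\<in>AC. c B * T_stat P le B I)"
            unfolding T_stat_def using T_plus_rho[OF True]
            by (simp add: sum_subtractf[symmetric] algebra_simps)
          finally show ?thesis by (simp add: sum_fun_app)
        next
          case False
          thus ?thesis using f unfolding funs_on_ideals_def
            by (simp add: sum_fun_app T_stat_def T_plus_def T_minus_def)
        qed
      qed
      also have "\<dots> \<in> rfs.span ?S"
        by (intro rfs.span_sum rfs.span_scale rfs.span_base) auto
      finally show "f \<in> rfs.span ?S" .
    qed
  next
    show "rfs.span ?S \<subseteq> ?Z"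
    proof
      fix f assume "f \<in> rfs.span ?S"
      thus "f \<in> ?Z"
      proof (induction rule: rfs.span_induct)
        case base
        show ?case
          unfolding rfs.subspace_def funs_on_ideals_def zm_iff
          by (auto simp: sum.distrib sum_distrib_left[symmetric])
      next
        case (step x)
        thus ?case using T_in_Z by auto
      qed
    qed
  qed
qed

end
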